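(* The linear map $F:\mathcal{B}\to QSym$ defined on basis elements by $F(B)=F(P_B)$ (with $F(B_\emptyset)=1$) is a morphism of combinatorial Hopf algebras $(\mathcal{B},\zeta)\to(QSym,\zeta_Q)$; that is, $F$ is a morphism of graded Hopf algebras and $\zeta_Q\circ F=\zeta$. In particular $F(P_{B_1\sqcup B_2})=F(P_{B_1})F(P_{B_2})$ and $\Delta(F(P_B))=\sum_{I\subseteq V}F(P_{B|_I})\otimes F(P_{B/I})$.
   Context: A building set on a finite set $V$ is a collection $B$ of nonempty subsets of $V$ such that $\{v\}\in B$ for all $v\in V$ and such that $I,J\in B$, $I\cap J\neq\emptyset$ imply $I\cup J\in B$. It is connected if $V\in B$, and discrete if it consists only of the singletons. For $I\subseteq V$, the restriction is $B|_I=\{J\in B: J\subseteq I\}$ (a building set on $I$) and the contraction is $B/I=\{J\subseteq V\setminus I: J\neq\emptyset,\ J\in B\text{ or }J\cup I'\in B\text{ for some }I'\subseteq I\}$ (a building set on $V\setminus I$). The nestohedron of $B$ is the Minkowski sum $P_B=\sum_{I\in B}\mathrm{Conv}\{e_i: i\in I\}\subset\mathbb{R}^V$. For a convex polytope $Q\subset\mathbb{R}^V$, a function $f:V\to\mathbb{N}=\{1,2,\dots\}$ is $Q$-generic if the linear functional $x\mapsto\sum_{v\in V}f(v)x_v$ attains its maximum over $Q$ at a unique point. Set $F(Q)=\sum_{f\ Q\text{-generic}}\prod_{v\in V}x_{f(v)}$. For a composition $\alpha=(a_1,\dots,a_k)\models n$, $M_\alpha=\sum_{i_1<\dots<i_k}x_{i_1}^{a_1}\cdots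 x_{i_k}^{a_k}$, $M_{()}=1$. $\mathcal{B}$ is the Hopf algebra over a field $k$ with basis the isomorphism classes of building sets on finite sets, graded by ground set size, with product $B_1\cdot B_2=B_1\sqcup B_2$, coproduct $\Delta(B)=\sum_{I\subseteq V}B|_I\otimes B/I$, unit the empty building set $B_\emptyset$ and counit $\epsilon(B_\emptyset)=1$, $\epsilon(B)=0$ otherwise. The character $\zeta:\mathcal{B}\to k$ is $\zeta(B)=1$ if $B$ is discrete (including $B_\emptyset$) and $0$ otherwise. $QSym$ is the usual Hopf algebra of quasisymmetric functions (coproduct $\Delta M_{(a_1,\dots,a_k)}=\sum_{j=0}^k M_{(a_1,\dots,a_j)}\otimes M_{(a_{j+1},\dots,a_k)}$), and $\zeta_Q:QSym\to k$ is the character with $\zeta_Q(M_\alpha)=1$ if $\alpha=()$ or $\alpha$ has a single part, and $0$ otherwise. *)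

theory Defs
  imports Complex_Main "HOL-Library.FuncSet"
begin

definition building_set :: "'a set \<Rightarrow> 'a set set \<Rightarrow> bool" where
  "building_set V B \<longleftrightarrow>
     (\<forall>I\<in>B. I \<noteq> {} \<and> I \<subseteq> V) \<and>
     (\<forall>v\<in>V. {v} \<in> B) \<and>
     (\<forall>I\<in>B. \<forall>J\<in>B. I \<inter> J \<noteq> {} \<longrightarrow> I \<union> J \<in> B)"

definition discrete_bs :: "'a set \<Rightarrow> 'a set set \<Rightarrow> bool" where
  "discrete_bs V B \<longleftrightarrow> B = (\<lambda>v. {v}) ` V"

definition restr :: "'a set set \<Rightarrow> 'a set \<Rightarrow> 'a set set" where
  "restr B I = {J \<in> B. J \<subseteq> I}"

definition contr :: "'a set \<Rightarrow> 'a set set \<Rightarrow> 'a set \<Rightarrow> 'a set set" where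
  "contr V B I = {J. J \<subseteq> V - I \<and> J \<noteq> {} \<and> (J \<in> B \<or> (\<exists>I'\<subseteq>I. J \<union> I' \<in> B))}"

text \<open>Points of R^V are represented as functions 'a => real (supported on V).
  Conv{e_i : i in I} written out explicitly.\<close>
definition simplex :: "'a set \<Rightarrow> ('a \<Rightarrow> real) set" where
  "simplex I = {x. (\<forall>v. 0 \<le> x v) \<and> (\<forall>v. v \<notin> I \<longrightarrow> x v = 0) \<and> sum x I = 1}"

definition nestohedron :: "'a set set \<Rightarrow> ('a \<Rightarrow> real) set" where
  "nestohedron B = {(\<lambda>v. \<Sum>J\<in>B. y J v) | y. \<forall>J\<in>B. y J \<in> simplex J}"

definition generic :: "'a set \<Rightarrow> ('a \<Rightarrow> real) set \<Rightarrow> ('a \<Rightarrow> nat) \<Rightarrow> bool" where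
  "generic V Q f \<longleftrightarrow>
     (\<exists>!p. p \<in> Q \<and> (\<forall>q\<in>Q. (\<Sum>v\<in>V. real (f v) * q v) \<le> (\<Sum>v\<in>V. real (f v) * p v)))"

text \<open>A formal power series with integer (here: natural) coefficients is represented
  by its coefficient function on monomials; a monomial prod_i x_i^(m i) is an
  exponent vector m :: nat => nat with finite support (variables x_1, x_2, ...;
  the exponent of x_0 is irrelevant/zero).\<close>

definition fin_supp :: "(nat \<Rightarrow> nat) \<Rightarrow> bool" where
  "fin_supp m \<longleftrightarrow> finite {i. m i \<noteq> 0}"

definition Fpoly :: "'a set \<Rightarrow> ('a \<Rightarrow> real) set \<Rightarrow> (nat \<Rightarrow> nat) \<Rightarrow> nat" where
  "Fpoly V Q m = card {f \<in> V \<rightarrow>\<^sub>E {1..}. generic V Q f \<and> (\<forall>i. card {v\<in>V. f v = i} = m i)}"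

definition FB :: "'a set \<Rightarrow> 'a set set \<Rightarrow> (nat \<Rightarrow> nat) \<Rightarrow> nat" where
  "FB V B = Fpoly V (nestohedron B)"

definition flat :: "(nat \<Rightarrow> nat) \<Rightarrow> nat list" where
  "flat m = map m (sorted_list_of_set {i. m i \<noteq> 0})"

definition quasisymmetric :: "((nat \<Rightarrow> nat) \<Rightarrow> nat) \<Rightarrow> bool" where
  "quasisymmetric F \<longleftrightarrow>
     (\<forall>m m'. fin_supp m \<and> fin_supp m' \<and> m 0 = 0 \<and> m' 0 = 0 \<and> flat m = flat m' \<longrightarrow> F m = F m')"

definition homogeneous :: "nat \<Rightarrow> ((nat \<Rightarrow> nat) \<Rightarrow> nat) \<Rightarrow> bool" where
  "homogeneous n F \<longleftrightarrow>
     (\<forall>m. fin_supp m \<and> F m \<noteq> 0 \<longrightarrow> m 0 = 0 \<and> (\<Sum>i\<in>{i. m i \<noteq> 0}. m i) = n)"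

text \<open>Coefficient of M_alpha: the coefficient of x_1^(a_1) ... x_k^(a_k).\<close>
definition Mcoef :: "((nat \<Rightarrow> nat) \<Rightarrow> nat) \<Rightarrow> nat list \<Rightarrow> nat" where
  "Mcoef F \<alpha> = F (\<lambda>i. if 1 \<le> i \<and> i \<le> length \<alpha> then \<alpha> ! (i - 1) else 0)"

definition composition :: "nat list \<Rightarrow> bool" where
  "composition \<alpha> \<longleftrightarrow> 0 \<notin> set \<alpha>"

definition ps_mult :: "((nat \<Rightarrow> nat) \<Rightarrow> nat) \<Rightarrow> ((nat \<Rightarrow> nat) \<Rightarrow> nat) \<Rightarrow> (nat \<Rightarrow> nat) \<Rightarrow> nat" where
  "ps_mult F G m = (\<Sum>m1\<in>{m1. \<forall>i. m1 i \<le> m i}. F m1 * G (\<lambda>i. m i - m1 i))"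

text \<open>zeta_Q applied to a homogeneous quasisymmetric function of degree n:
  sum of the coefficients of M_() and of the M_(a) (only a <= n can occur).\<close>
definition zetaQ :: "nat \<Rightarrow> ((nat \<Rightarrow> nat) \<Rightarrow> nat) \<Rightarrow> nat" where
  "zetaQ n F = Mcoef F [] + (\<Sum>a\<in>{1..n}. Mcoef F [a])"

end

theory Submission
  imports Defs
begin


definition ee :: "'a \<Rightarrow> 'a \<Rightarrow> real" where "ee a = (\<lambda>v. if v = a then 1 else 0)"

definition gen :: "'a set set \<Rightarrow> ('a \<Rightarrow> nat) \<Rightarrow> bool" where
  "gen B f \<longleftrightarrow> (\<forall>J\<in>B. \<exists>a\<in>J. \<forall>b\<in>J. b \<noteq> a \<longrightarrow> f b < f a)"

lemma simplex_L:
  assumes "finite V" "J \<subseteq> V" "y \<in> simplex J"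
  shows "(\<Sum>v\<in>V. real (f v) * y v) = (\<Sum>v\<in>J. real (f v) * y v)"
  using assms by (intro sum.mono_neutral_right) (auto simp: simplex_def)

lemma simplex_le:
  assumes "finite J" "y \<in> simplex J" "\<forall>b\<in>J. f b \<le> (c::nat)"
  shows "(\<Sum>v\<in>J. real (f v) * y v) \<le> real c"
proof -
  have "(\<Sum>v\<in>J. real (f v) * y v) \<le> (\<Sum>v\<in>J. real c * y v)"
    using assms by (intro sum_mono mult_right_mono) (auto simp: simplex_def)
  also have "\<dots> = real c" using assms by (simp add: simplex_def sum_distrib_left[symmetric])
  finally show ?thesis .
qed

lemma simplex_eq:
  assumes fin: "finite J" and y: "y \<in> simplex J" and a: "a \<in> J"
    and lt: "\<forall>b\<in>J. b \<noteq> a \<longrightarrow> f b < f a"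
    and ge: "real (f a) \<le> (\<Sum>v\<in>J. real (f v) * y v)"
  shows "y = ee a"
proof -
  have y0: "\<forall>v. 0 \<le> y v" "\<forall>v. v\<notin>J \<longrightarrow> y v = 0" "sum y J = 1" using y by (auto simp: simplex_def)
  have "(\<Sum>v\<in>J. (real (f a) - real (f v)) * y v) = real (f a) * sum y J - (\<Sum>v\<in>J. real (f v) * y v)"
    by (simp only: left_diff_distrib sum_subtractf sum_distrib_left)
  also have "\<dots> \<le> 0" using y0 ge by simp
  finally have le: "(\<Sum>v\<in>J. (real (f a) - real (f v)) * y v) \<le> 0" .
  have nn: "\<forall>v\<in>J. 0 \<le> (real (f a) - real (f v)) * y v"
  proof
    fix v assume "v \<in> J"
    show "0 \<le> (real (f a) - real (f v)) * y v"
      using lt \<open>v\<in>J\<close> y0 by (cases "v = a") (auto intro!: mult_nonneg_nonneg simp: less_imp_le)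
  qed
  hence "(\<Sum>v\<in>J. (real (f a) - real (f v)) * y v) = 0" by (intro antisym[OF le] sum_nonneg) auto
  hence "\<forall>v\<in>J. (real (f a) - real (f v)) * y v = 0" using sum_nonneg_eq_0_iff[OF fin, of "\<lambda>v. (real (f a) - real (f v)) * y v"] nn by simp
  hence yz: "\<forall>v\<in>J. v \<noteq> a \<longrightarrow> y v = 0"
  proof (intro ballI impI)
    fix v assume h: "\<forall>v\<in>J. (real (f a) - real (f v)) * y v = 0" and v: "v\<in>J" "v \<noteq> a"
    have "real (f a) - real (f v) \<noteq> 0" using lt v by auto
    thus "y v = 0" using h v by auto
  qed
  have "sum y J = y a + sum y (J - {a})" using sum.remove[OF fin a] by simp
  also have "sum y (J - {a}) = 0" using yz by (intro sum.neutral) auto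
  finally have "y a = 1" using y0 by simp
  then show ?thesis unfolding ee_def using yz y0 by (auto simp: fun_eq_iff)
qed


lemma generic_iff_gen:
  fixes f :: "'a \<Rightarrow> nat"
  assumes V: "finite V" and B: "\<forall>J\<in>B. J \<noteq> {} \<and> J \<subseteq> V"
  shows "generic V (nestohedron B) f \<longleftrightarrow> gen B f"
proof -
  define L where "L = (\<lambda>x::'a\<Rightarrow>real. \<Sum>v\<in>V. real (f v) * x v)"
  have gL: "generic V (nestohedron B) f \<longleftrightarrow> (\<exists>!p. p \<in> nestohedron B \<and> (\<forall>q\<in>nestohedron B. L q \<le> L p))"
    unfolding generic_def L_def by simp
  have "B \<subseteq> Pow V" using B by auto
  hence finB: "finite B" using V finite_subset by blast
  have finJ: "\<And>J. J\<in>B \<Longrightarrow> finite J" using B V finite_subset by blast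
  define M where "M = (\<lambda>J. Max (f ` J))"
  define c where "c = (\<lambda>J. SOME a. a \<in> J \<and> f a = M J)"
  have c: "c J \<in> J \<and> f (c J) = M J" if "J\<in>B" for J
  proof -
    have "M J \<in> f ` J" using finJ[OF that] B that unfolding M_def by (intro Max_in) auto
    then obtain a where "a\<in>J" "f a = M J" by auto
    thus ?thesis unfolding c_def using someI[of "\<lambda>a. a\<in>J \<and> f a = M J" a] by blast
  qed
  have Mge: "\<And>J b. J\<in>B \<Longrightarrow> b\<in>J \<Longrightarrow> f b \<le> M J" using finJ unfolding M_def by auto
  have Lsum: "\<And>y. L (\<lambda>v. \<Sum>J\<in>B. y J v) = (\<Sum>J\<in>B. L (y J))"
    unfolding L_def sum_distrib_left by (rule sum.swap)
  have Lle: "L y \<le> real (M J)" if "J\<in>B" "y \<in> simplex J" for J y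
    using simplex_L[OF V _ that(2), of f] simplex_le[OF finJ[OF that(1)] that(2), of f "M J"] B that Mge
    unfolding L_def by auto
  have ee_in: "ee a \<in> simplex J" if "J\<in>B" "a\<in>J" for J a
    using that finJ[OF that(1)] by (auto simp: simplex_def ee_def)
  have Lee: "L (ee a) = real (f a)" if "a\<in>V" for a
    using that V unfolding L_def ee_def by (simp add: if_distrib cong: if_cong)
  have Qle: "L q \<le> (\<Sum>J\<in>B. real (M J))" if qQ: "q \<in> nestohedron B" for q
  proof -
    obtain y where q: "q = (\<lambda>v. \<Sum>J\<in>B. y J v)" and y: "\<forall>J\<in>B. y J \<in> simplex J"
      using qQ unfolding nestohedron_def by blast
    show ?thesis unfolding q Lsum using Lle y by (intro sum_mono) auto
  qed
  have sumQ: "(\<lambda>v. \<Sum>J\<in>B. y J v) \<in> nestohedron B" if "\<forall>J\<in>B. y J \<in> simplex J" for y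
    using that unfolding nestohedron_def by blast
  have Lmax: "L (\<lambda>v. \<Sum>J\<in>B. ee (d J) v) = (\<Sum>J\<in>B. real (M J))"
    if "\<forall>J\<in>B. d J \<in> J \<and> f (d J) = M J" for d
    unfolding Lsum using that B Lee by (intro sum.cong refl) (metis subsetD)
  define p0 where "p0 = (\<lambda>v. \<Sum>J\<in>B. ee (c J) v)"
  have p0Q: "p0 \<in> nestohedron B" unfolding p0_def using ee_in c by (intro sumQ) auto
  have Lp0: "L p0 = (\<Sum>J\<in>B. real (M J))" unfolding p0_def using c by (intro Lmax) auto
  show ?thesis
  proof
    assume g: "generic V (nestohedron B) f"
    show "gen B f" unfolding gen_def
    proof (rule ccontr)
      assume "\<not> (\<forall>J\<in>B. \<exists>a\<in>J. \<forall>b\<in>J. b \<noteq> a \<longrightarrow> f b < f a)"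
      then obtain J0 where J0: "J0\<in>B" and nn: "\<forall>a\<in>J0. \<exists>b\<in>J0. b \<noteq> a \<and> \<not> f b < f a" by auto
      obtain b where b: "b \<in> J0" "b \<noteq> c J0" "f b = M J0" using nn c[OF J0] Mge[OF J0]
        by (metis le_antisym not_less)
      define d where "d = (\<lambda>J. if J = J0 then b else c J)"
      define p1 where "p1 = (\<lambda>v. \<Sum>J\<in>B. ee (d J) v)"
      have p1Q: "p1 \<in> nestohedron B" unfolding p1_def d_def using ee_in c b J0 by (intro sumQ) auto
      have Lp1: "L p1 = (\<Sum>J\<in>B. real (M J))" unfolding p1_def using c b by (intro Lmax) (auto simp: d_def)
      have "p0 = p1" using g[unfolded gL] p0Q p1Q Qle Lp0 Lp1 by (smt (verit))
      moreover have "p0 (c J0) = 1 + (\<Sum>J\<in>B-{J0}. ee (c J) (c J0))"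
        unfolding p0_def by (subst sum.remove[OF finB J0]) (simp add: ee_def)
      moreover have "p1 (c J0) = 0 + (\<Sum>J\<in>B-{J0}. ee (c J) (c J0))"
        unfolding p1_def using b by (subst sum.remove[OF finB J0]) (auto simp: ee_def d_def intro!: sum.cong)
      ultimately show False by simp
    qed
  next
    assume g: "gen B f"
    have cu: "\<forall>b\<in>J. b \<noteq> c J \<longrightarrow> f b < f (c J)" if JB: "J\<in>B" for J
    proof -
      obtain a where a: "a\<in>J" "\<forall>b\<in>J. b \<noteq> a \<longrightarrow> f b < f a" using g JB unfolding gen_def by blast
      have "a = c J" using a c[OF JB] Mge[OF JB a(1)] by (metis not_less)
      thus ?thesis using a by simp
    qed
    show "generic V (nestohedron B) f" unfolding gL
    proof (rule ex1I[of _ p0])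
      show "p0 \<in> nestohedron B \<and> (\<forall>q\<in>nestohedron B. L q \<le> L p0)" using p0Q Qle Lp0 by simp
    next
      fix p assume p: "p \<in> nestohedron B \<and> (\<forall>q\<in>nestohedron B. L q \<le> L p)"
      obtain y where py: "p = (\<lambda>v. \<Sum>J\<in>B. y J v)" and y: "\<forall>J\<in>B. y J \<in> simplex J"
        using p unfolding nestohedron_def by blast
      have ge: "(\<Sum>J\<in>B. real (M J)) \<le> (\<Sum>J\<in>B. L (y J))" using p p0Q Lp0 Lsum py by auto
      have eq: "L (y J) = real (M J)" if "J\<in>B" for J
      proof (rule ccontr)
        assume "L (y J) \<noteq> real (M J)"
        hence "L (y J) < real (M J)" using Lle that y by force
        hence "(\<Sum>J\<in>B. L (y J)) < (\<Sum>J\<in>B. real (M J))"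
          using that Lle y by (intro sum_strict_mono_ex1[OF finB]) auto
        thus False using ge by simp
      qed
      have yJ: "y J = ee (c J)" if "J\<in>B" for J
      proof (rule simplex_eq[OF finJ[OF that] _ _ cu[OF that]])
        show "y J \<in> simplex J" using y that by auto
        show "c J \<in> J" using c that by auto
        show "real (f (c J)) \<le> (\<Sum>v\<in>J. real (f v) * y J v)"
          using eq[OF that] c[OF that] simplex_L[OF V _ \<open>y J \<in> simplex J\<close>, of f] B that
          unfolding L_def by auto
      qed
      show "p = p0" unfolding py p0_def using yJ by (intro ext sum.cong) auto
    qed
  qed
qed




definition Sset :: "'a set \<Rightarrow> 'a set set \<Rightarrow> (nat \<Rightarrow> nat) \<Rightarrow> ('a \<Rightarrow> nat) set" where
  "Sset V B m = {f \<in> V \<rightarrow>\<^sub>E {1..}. gen B f \<and> (\<forall>i. card {v\<in>V. f v = i} = m i)}"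

lemma FB_eq:
  assumes "finite V" "\<forall>J\<in>B. J \<noteq> {} \<and> J \<subseteq> V"
  shows "FB V B m = card (Sset V B m)"
  unfolding FB_def Fpoly_def Sset_def using generic_iff_gen[OF assms] by simp

lemma Sset_val:
  assumes "finite V" "f \<in> Sset V B m" "v \<in> V"
  shows "m (f v) \<noteq> 0"
proof -
  have "card {w\<in>V. f w = f v} = m (f v)" using assms(2) unfolding Sset_def by auto
  moreover have "card {w\<in>V. f w = f v} \<noteq> 0" using assms(1,3) by (subst card_0_eq) auto
  ultimately show ?thesis by simp
qed

lemma Sset_supp:
  assumes "finite V" "f \<in> Sset V B m"
  shows "{i. m i \<noteq> 0} = f ` V"
proof
  show "f ` V \<subseteq> {i. m i \<noteq> 0}" using Sset_val[OF assms] by auto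
  show "{i. m i \<noteq> 0} \<subseteq> f ` V"
  proof
    fix i assume "i \<in> {i. m i \<noteq> 0}"
    moreover have "card {w\<in>V. f w = i} = m i" using assms(2) unfolding Sset_def by auto
    ultimately have "card {w\<in>V. f w = i} \<noteq> 0" by simp
    hence "{w\<in>V. f w = i} \<noteq> {}" by (metis card.empty)
    thus "i \<in> f ` V" by auto
  qed
qed

lemma finite_Sset:
  assumes "finite V" shows "finite (Sset V B m)"
proof (cases "finite {i. m i \<noteq> 0}")
  case True
  have "Sset V B m \<subseteq> V \<rightarrow>\<^sub>E {i. m i \<noteq> 0}"
    using Sset_val[OF assms] unfolding Sset_def by (auto simp: PiE_iff extensional_def)
  thus ?thesis using finite_PiE[OF assms, of "\<lambda>_. {i. m i \<noteq> 0}"] True finite_subset by blast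
next
  case False
  have "Sset V B m = {}" using Sset_supp[OF assms] False assms by (metis equals0I finite_imageI)
  thus ?thesis by simp
qed

lemma card_fibers:
  assumes "finite A" "finite C" "g ` A \<subseteq> C"
  shows "card A = (\<Sum>c\<in>C. card {a\<in>A. g a = c})"
proof -
  have "A = (\<Union>c\<in>C. {a\<in>A. g a = c})" using assms(3) by auto
  hence "card A = card (\<Union>c\<in>C. {a\<in>A. g a = c})" by simp
  also have "\<dots> = (\<Sum>c\<in>C. card {a\<in>A. g a = c})"
    using assms by (intro card_UN_disjoint) auto
  finally show ?thesis .
qed

lemma gen_cong:
  assumes "\<forall>J\<in>B. \<forall>v\<in>J. f v = g v"
  shows "gen B f = gen B g"
  using assms unfolding gen_def by (metis (no_types, lifting))

lemma gen_Un: "gen (B1 \<union> B2) f \<longleftrightarrow> gen B1 f \<and> gen B2 f"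
  unfolding gen_def by blast

lemma gen_mono: "gen B f \<Longrightarrow> B' \<subseteq> B \<Longrightarrow> gen B' f"
  unfolding gen_def by blast

lemma bs_props:
  assumes "building_set V B"
  shows "\<forall>J\<in>B. J \<noteq> {} \<and> J \<subseteq> V"
  using assms unfolding building_set_def by blast

lemma part_empty: "FB ({}::'a set) {} m = (if (\<forall>i. m i = 0) then 1 else 0)"
proof -
  have "FB ({}::'a set) {} m = card (Sset ({}::'a set) {} m)" by (rule FB_eq) auto
  also have "Sset ({}::'a set) {} m = (if (\<forall>i. m i = 0) then {\<lambda>x. undefined} else {})"
    unfolding Sset_def gen_def by auto
  finally show ?thesis by simp
qed

lemma part_homog:
  assumes V: "finite V" and B: "building_set V B"
  shows "homogeneous (card V) (FB V B)"
  unfolding homogeneous_def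
proof (intro allI impI)
  fix m assume h: "fin_supp m \<and> FB V B m \<noteq> 0"
  hence "Sset V B m \<noteq> {}" using FB_eq[OF V bs_props[OF B]] by auto
  then obtain f where f: "f \<in> Sset V B m" by auto
  have c: "\<And>i. card {v\<in>V. f v = i} = m i" and fV: "\<And>v. v\<in>V \<Longrightarrow> f v \<ge> 1"
    using f unfolding Sset_def by (auto simp: PiE_iff)
  have "m 0 = card {v\<in>V. f v = 0}" using c by simp
  also have "{v\<in>V. f v = 0} = {}" using fV by fastforce
  finally have m0: "m 0 = 0" by simp
  have "(\<Sum>i\<in>{i. m i \<noteq> 0}. m i) = (\<Sum>i\<in>f ` V. card {v\<in>V. f v = i})"
    using Sset_supp[OF V f] c by simp
  also have "\<dots> = card V" using card_fibers[OF V _ subset_refl, of f] V by simp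
  finally show "m 0 = 0 \<and> (\<Sum>i\<in>{i. m i \<noteq> 0}. m i) = card V" using m0 by simp
qed

lemma Mcoef_nil: "Mcoef F [] = F (\<lambda>i. 0)"
  unfolding Mcoef_def by (rule arg_cong[of _ _ F]) (auto simp: fun_eq_iff)

lemma Mcoef_single: "Mcoef F [a] = F (\<lambda>i. if i = 1 then a else 0)"
  unfolding Mcoef_def by (rule arg_cong[of _ _ F]) (auto simp: fun_eq_iff)

lemma gen_const_iff:
  assumes "\<forall>J\<in>B. J \<noteq> {} \<and> J \<subseteq> V" "\<forall>v\<in>V. f v = 1"
  shows "gen B f \<longleftrightarrow> (\<forall>J\<in>B. \<exists>a. J = {a})"
proof
  assume g: "gen B f"
  show "\<forall>J\<in>B. \<exists>a. J = {a}"
  proof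
    fix J assume J: "J \<in> B"
    obtain a where a: "a \<in> J" "\<forall>b\<in>J. b \<noteq> a \<longrightarrow> f b < f a" using g J unfolding gen_def by blast
    have "\<forall>b\<in>J. b = a"
    proof
      fix b assume "b \<in> J"
      moreover have "f b = 1" "f a = 1" using assms J a(1) \<open>b\<in>J\<close> by auto
      ultimately show "b = a" using a(2) by fastforce
    qed
    thus "\<exists>a. J = {a}" using a(1) by blast
  qed
next
  assume "\<forall>J\<in>B. \<exists>a. J = {a}"
  thus "gen B f" unfolding gen_def by fastforce
qed

lemma discrete_iff:
  assumes "building_set V B"
  shows "discrete_bs V B \<longleftrightarrow> (\<forall>J\<in>B. \<exists>a. J = {a})"
proof
  assume "discrete_bs V B" thus "\<forall>J\<in>B. \<exists>a. J = {a}" unfolding discrete_bs_def by blast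
next
  assume h: "\<forall>J\<in>B. \<exists>a. J = {a}"
  have "B \<subseteq> (\<lambda>v. {v}) ` V"
  proof
    fix J assume "J \<in> B"
    then obtain a where "J = {a}" using h by blast
    moreover have "J \<subseteq> V" using assms \<open>J\<in>B\<close> unfolding building_set_def by blast
    ultimately show "J \<in> (\<lambda>v. {v}) ` V" by blast
  qed
  moreover have "(\<lambda>v. {v}) ` V \<subseteq> B" using assms unfolding building_set_def by blast
  ultimately show "discrete_bs V B" unfolding discrete_bs_def by blast
qed

lemma part_zeta:
  assumes V: "finite V" and B: "building_set V B"
  shows "zetaQ (card V) (FB V B) = (if discrete_bs V B then 1 else 0)"
proof -
  note BP = bs_props[OF B]
  have FBe: "\<And>m. FB V B m = card (Sset V B m)" using FB_eq[OF V BP] .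
  show ?thesis
  proof (cases "V = {}")
    case True
    hence B0: "B = {}" using BP by blast
    have "Sset V B (\<lambda>i. 0) = {\<lambda>x. undefined}" unfolding Sset_def gen_def True B0 by auto
    hence c1: "card (Sset V B (\<lambda>i. 0)) = 1" by simp
    have "discrete_bs V B" unfolding discrete_bs_def True B0 by simp
    thus ?thesis unfolding zetaQ_def Mcoef_nil FBe c1 using True by simp
  next
    case False
    have nil: "Sset V B (\<lambda>i. 0) = {}"
    proof -
      { fix f assume f: "f \<in> Sset V B (\<lambda>i. 0)"
        obtain v where "v \<in> V" using False by blast
        hence False using Sset_val[OF V f] by simp }
      thus ?thesis by blast
    qed
    have single: "card (Sset V B (\<lambda>i. if i = 1 then a else 0)) = (if a = card V then (if discrete_bs V B then 1 else 0) else 0)" for a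
    proof -
      let ?m = "\<lambda>i::nat. if i = 1 then a else 0"
      let ?c = "restrict (\<lambda>_. 1::nat) V"
      have vals: "\<forall>v\<in>V. f v = 1" if "f \<in> Sset V B ?m" for f
        using Sset_val[OF V that] by (metis (full_types))
      have feq: "f = ?c" if "f \<in> Sset V B ?m" for f
        using vals[OF that] that unfolding Sset_def by (intro PiE_ext[of f V "\<lambda>_. UNIV"]) (auto simp: PiE_iff)
      have ca: "a = card V" if "f \<in> Sset V B ?m" for f
      proof -
        have "card {v\<in>V. f v = 1} = ?m 1" using that unfolding Sset_def by blast
        moreover have "{v\<in>V. f v = 1} = V" using vals[OF that] by auto
        ultimately show ?thesis by simp
      qed
      have gc: "gen B ?c \<longleftrightarrow> discrete_bs V B"
        using gen_const_iff[OF BP, of ?c] discrete_iff[OF B] by simp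
      have cin: "?c \<in> Sset V B ?m \<longleftrightarrow> a = card V \<and> discrete_bs V B"
      proof -
        have "card {v\<in>V. ?c v = i} = ?m i \<longleftrightarrow> (i = 1 \<longrightarrow> card V = a)" for i
        proof (cases "i = 1")
          case True thus ?thesis by simp
        next
          case False
          hence "{v\<in>V. ?c v = i} = {}" by auto
          thus ?thesis using False by simp
        qed
        thus ?thesis unfolding Sset_def using gc by (auto simp: PiE_iff)
      qed
      have "Sset V B ?m = (if a = card V \<and> discrete_bs V B then {?c} else {})"
        using feq cin by auto
      thus ?thesis by simp
    qed
    have "zetaQ (card V) (FB V B) = (\<Sum>a\<in>{1..card V}. if a = card V then (if discrete_bs V B then 1 else 0) else 0)"
      unfolding zetaQ_def Mcoef_nil Mcoef_single FBe nil single by simp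
    also have "\<dots> = (if discrete_bs V B then 1 else 0)"
      using False V by (subst sum.delta) (auto simp: Suc_le_eq card_gt_0_iff)
    finally show ?thesis .
  qed
qed

lemma transfer_le:
  assumes V: "finite V" and BP: "\<forall>J\<in>B. J \<noteq> {} \<and> J \<subseteq> V"
    and bij: "bij_betw \<phi> {i. m i \<noteq> 0} {i. m' i \<noteq> 0}"
    and mono: "\<forall>i\<in>{i. m i \<noteq> 0}. \<forall>j\<in>{i. m i \<noteq> 0}. i < j \<longrightarrow> \<phi> i < \<phi> j"
    and mm: "\<forall>i\<in>{i. m i \<noteq> 0}. m' (\<phi> i) = m i"
    and m0: "m' 0 = 0"
  shows "card (Sset V B m) \<le> card (Sset V B m')"
proof -
  let ?S = "{i. m i \<noteq> 0}" and ?S' = "{i. m' i \<noteq> 0}"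
  define \<Phi> where "\<Phi> = (\<lambda>f. restrict (\<phi> \<circ> f) V)"
  have inj\<phi>: "inj_on \<phi> ?S" and im\<phi>: "\<phi> ` ?S = ?S'" using bij unfolding bij_betw_def by auto
  have into: "\<Phi> f \<in> Sset V B m'" if f: "f \<in> Sset V B m" for f
  proof -
    have fS: "\<And>v. v\<in>V \<Longrightarrow> f v \<in> ?S" using Sset_val[OF V f] by simp
    have fS': "\<And>v. v\<in>V \<Longrightarrow> \<phi> (f v) \<in> ?S'" using fS im\<phi> by blast
    have pos: "\<And>v. v\<in>V \<Longrightarrow> \<phi> (f v) \<in> {1..}" using fS' m0
      by (metis (mono_tags, lifting) atLeast_iff less_one mem_Collect_eq not_le)
    have gf: "gen B f" and cf: "\<And>i. card {v\<in>V. f v = i} = m i" using f unfolding Sset_def by auto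
    have g1: "gen B (\<phi> \<circ> f)" unfolding gen_def
    proof
      fix J assume J: "J\<in>B"
      obtain a where a: "a\<in>J" "\<forall>b\<in>J. b \<noteq> a \<longrightarrow> f b < f a" using gf J unfolding gen_def by blast
      have "\<forall>b\<in>J. b \<noteq> a \<longrightarrow> (\<phi> \<circ> f) b < (\<phi> \<circ> f) a"
        using a mono fS BP J by (auto simp: subset_iff)
      thus "\<exists>a\<in>J. \<forall>b\<in>J. b \<noteq> a \<longrightarrow> (\<phi> \<circ> f) b < (\<phi> \<circ> f) a" using a(1) by blast
    qed
    have "\<forall>J\<in>B. \<forall>v\<in>J. \<Phi> f v = (\<phi> \<circ> f) v" using BP unfolding \<Phi>_def by auto
    hence g2: "gen B (\<Phi> f)" using g1 gen_cong by blast
    have c2: "card {v\<in>V. \<Phi> f v = j} = m' j" for j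
    proof (cases "j \<in> ?S'")
      case True
      then obtain i where i: "i \<in> ?S" "j = \<phi> i" using im\<phi> by auto
      have "{v\<in>V. \<Phi> f v = j} = {v\<in>V. f v = i}"
        using i inj\<phi> fS unfolding \<Phi>_def inj_on_def by auto
      thus ?thesis using cf i mm by simp
    next
      case False
      hence e: "{v\<in>V. \<Phi> f v = j} = {}" using fS' unfolding \<Phi>_def by fastforce
      show ?thesis using False by (subst e) simp
    qed
    show ?thesis unfolding Sset_def using pos g2 c2 unfolding \<Phi>_def by auto
  qed
  have inj: "inj_on \<Phi> (Sset V B m)"
  proof
    fix f g assume f: "f \<in> Sset V B m" and g: "g \<in> Sset V B m" and e: "\<Phi> f = \<Phi> g"
    show "f = g"
    proof (rule PiE_ext[of f V "\<lambda>_. {1..}"])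
      show "f \<in> V \<rightarrow>\<^sub>E {1..}" "g \<in> V \<rightarrow>\<^sub>E {1..}" using f g unfolding Sset_def by auto
      fix v assume v: "v \<in> V"
      have "\<phi> (f v) = \<phi> (g v)" using e v unfolding \<Phi>_def by (metis comp_apply restrict_apply')
      thus "f v = g v" using inj\<phi> Sset_val[OF V f v] Sset_val[OF V g v] unfolding inj_on_def by blast
    qed
  qed
  show ?thesis using card_inj_on_le[OF inj _ finite_Sset[OF V]] into by blast
qed

lemma flat_phi:
  assumes fm: "fin_supp m" and fm': "fin_supp m'" and fl: "flat m = flat m'"
  shows "\<exists>\<phi>. bij_betw \<phi> {i. m i \<noteq> 0} {i. m' i \<noteq> 0} \<and>
    (\<forall>i\<in>{i. m i \<noteq> 0}. \<forall>j\<in>{i. m i \<noteq> 0}. i < j \<longrightarrow> \<phi> i < \<phi> j) \<and>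
    (\<forall>i\<in>{i. m i \<noteq> 0}. m' (\<phi> i) = m i)"
proof -
  let ?S = "{i. m i \<noteq> 0}" and ?S' = "{i. m' i \<noteq> 0}"
  define xs where "xs = sorted_list_of_set ?S"
  define xs' where "xs' = sorted_list_of_set ?S'"
  have fS: "finite ?S" and fS': "finite ?S'" using fm fm' unfolding fin_supp_def by auto
  have mx: "map m xs = map m' xs'" using fl unfolding flat_def xs_def xs'_def by simp
  define n where "n = length xs"
  have n': "length xs' = n" using arg_cong[OF mx, of length] unfolding n_def by simp
  have bx: "bij_betw (nth xs) {..<n} ?S"
    using fS unfolding xs_def n_def by (intro bij_betw_nth) auto
  have bx': "bij_betw (nth xs') {..<n} ?S'"
    using fS' n'[symmetric] unfolding xs'_def by (intro bij_betw_nth) auto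
  have sx: "sorted xs" unfolding xs_def by simp
  have sx': "sorted_wrt (<) xs'" unfolding xs'_def by (rule strict_sorted_list_of_set)
  define \<psi> where "\<psi> = inv_into {..<n} (nth xs)"
  have bpsi: "bij_betw \<psi> ?S {..<n}" unfolding \<psi>_def by (rule bij_betw_inv_into[OF bx])
  have psi: "\<psi> i < n \<and> xs ! \<psi> i = i" if "i \<in> ?S" for i
  proof -
    have "i \<in> (nth xs) ` {..<n}" using bx that unfolding bij_betw_def by auto
    thus ?thesis unfolding \<psi>_def using inv_into_into[of i "nth xs" "{..<n}"] f_inv_into_f[of i "nth xs" "{..<n}"] by auto
  qed
  define \<phi> where "\<phi> = nth xs' \<circ> \<psi>"
  have "bij_betw \<phi> ?S ?S'" unfolding \<phi>_def by (rule bij_betw_trans[OF bpsi bx'])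
  moreover have "\<forall>i\<in>?S. \<forall>j\<in>?S. i < j \<longrightarrow> \<phi> i < \<phi> j"
  proof (intro ballI impI)
    fix i j assume i: "i \<in> ?S" and j: "j \<in> ?S" and ij: "i < j"
    have "\<psi> i < \<psi> j"
    proof (rule ccontr)
      assume "\<not> \<psi> i < \<psi> j"
      hence "xs ! \<psi> j \<le> xs ! \<psi> i" using sorted_nth_mono[OF sx, of "\<psi> j" "\<psi> i"] psi[OF i] n_def by simp
      thus False using psi[OF i] psi[OF j] ij by simp
    qed
    thus "\<phi> i < \<phi> j" unfolding \<phi>_def using sorted_wrt_nth_less[OF sx'] psi[OF j] n' by simp
  qed
  moreover have "\<forall>i\<in>?S. m' (\<phi> i) = m i"
  proof
    fix i assume i: "i \<in> ?S"
    have "m' (\<phi> i) = map m' xs' ! \<psi> i" unfolding \<phi>_def using psi[OF i] n' by simp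
    also have "\<dots> = map m xs ! \<psi> i" using mx by simp
    also have "\<dots> = m i" using psi[OF i] n_def by simp
    finally show "m' (\<phi> i) = m i" .
  qed
  ultimately show ?thesis by blast
qed

lemma part_qs:
  assumes V: "finite V" and B: "building_set V B"
  shows "quasisymmetric (FB V B)"
  unfolding quasisymmetric_def
proof (intro allI impI)
  fix m m' assume h: "fin_supp m \<and> fin_supp m' \<and> m 0 = 0 \<and> m' 0 = 0 \<and> flat m = flat m'"
  note BP = bs_props[OF B]
  obtain \<phi> where p: "bij_betw \<phi> {i. m i \<noteq> 0} {i. m' i \<noteq> 0}"
    "\<forall>i\<in>{i. m i \<noteq> 0}. \<forall>j\<in>{i. m i \<noteq> 0}. i < j \<longrightarrow> \<phi> i < \<phi> j" "\<forall>i\<in>{i. m i \<noteq> 0}. m' (\<phi> i) = m i"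
    using flat_phi h by blast
  obtain \<phi>' where p': "bij_betw \<phi>' {i. m' i \<noteq> 0} {i. m i \<noteq> 0}"
    "\<forall>i\<in>{i. m' i \<noteq> 0}. \<forall>j\<in>{i. m' i \<noteq> 0}. i < j \<longrightarrow> \<phi>' i < \<phi>' j" "\<forall>i\<in>{i. m' i \<noteq> 0}. m (\<phi>' i) = m' i"
    using flat_phi h by metis
  have "card (Sset V B m) \<le> card (Sset V B m')" using transfer_le[OF V BP p] h by simp
  moreover have "card (Sset V B m') \<le> card (Sset V B m)" using transfer_le[OF V BP p'] h by simp
  ultimately show "FB V B m = FB V B m'" using FB_eq[OF V BP] by simp
qed

lemma card_split:
  assumes "finite V1" "finite V2" "V1 \<inter> V2 = {}"
  shows "card {v\<in>V1 \<union> V2. f v = i} = card {v\<in>V1. f v = i} + card {v\<in>V2. f v = i}"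
proof -
  have "{v\<in>V1 \<union> V2. f v = i} = {v\<in>V1. f v = i} \<union> {v\<in>V2. f v = i}" by auto
  thus ?thesis using assms by (simp add: card_Un_disjoint disjoint_iff)
qed

lemma finite_below:
  assumes "fin_supp m" shows "finite {m1. \<forall>i. m1 i \<le> (m i::nat)}"
proof -
  let ?S = "{i. m i \<noteq> 0}"
  have fS: "finite ?S" using assms unfolding fin_supp_def .
  have "{m1. \<forall>i. m1 i \<le> m i} \<subseteq> {f. \<forall>x. (x \<in> ?S \<longrightarrow> f x \<in> {..sum m ?S}) \<and> (x \<notin> ?S \<longrightarrow> f x = 0)}"
  proof
    fix m1 assume "m1 \<in> {m1. \<forall>i. m1 i \<le> m i}"
    hence h: "\<forall>i. m1 i \<le> m i" by simp
    have "\<forall>x. (x \<in> ?S \<longrightarrow> m1 x \<in> {..sum m ?S}) \<and> (x \<notin> ?S \<longrightarrow> m1 x = 0)"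
    proof (intro allI conjI impI)
      fix x
      { assume "x \<in> ?S"
        hence "m x \<le> sum m ?S" using fS by (intro member_le_sum) auto
        moreover have "m1 x \<le> m x" using h by blast
        ultimately show "m1 x \<in> {..sum m ?S}" by simp }
      { assume "x \<notin> ?S" thus "m1 x = 0" using h[rule_format, of x] by simp }
    qed
    thus "m1 \<in> {f. \<forall>x. (x \<in> ?S \<longrightarrow> f x \<in> {..sum m ?S}) \<and> (x \<notin> ?S \<longrightarrow> f x = 0)}" by simp
  qed
  thus ?thesis using finite_set_of_finite_funs[OF fS, of "{..sum m ?S}" 0] finite_subset by blast
qed

lemma fiber_prod:
  assumes V1: "finite V1" and V2: "finite V2" and D: "V1 \<inter> V2 = {}"
    and BP1: "\<forall>J\<in>B1. J \<noteq> {} \<and> J \<subseteq> V1" and BP2: "\<forall>J\<in>B2. J \<noteq> {} \<and> J \<subseteq> V2"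
    and m1: "\<forall>i. m1 i \<le> m i"
  shows "card {f \<in> Sset (V1 \<union> V2) (B1 \<union> B2) m. (\<lambda>i. card {v\<in>V1. f v = i}) = m1}
         = card (Sset V1 B1 m1) * card (Sset V2 B2 (\<lambda>i. m i - m1 i))"
proof -
  let ?A = "{f \<in> Sset (V1 \<union> V2) (B1 \<union> B2) m. (\<lambda>i. card {v\<in>V1. f v = i}) = m1}"
  let ?m2 = "\<lambda>i. m i - m1 i"
  define \<Phi> where "\<Phi> = (\<lambda>f::'a \<Rightarrow> nat. (restrict f V1, restrict f V2))"
  define \<Psi> where "\<Psi> = (\<lambda>(f1::'a\<Rightarrow>nat, f2::'a\<Rightarrow>nat). (\<lambda>v. if v \<in> V1 then f1 v else if v \<in> V2 then f2 v else undefined))"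
  have "bij_betw \<Phi> ?A (Sset V1 B1 m1 \<times> Sset V2 B2 ?m2)"
  proof (rule bij_betw_byWitness[where f'=\<Psi>])
    show "\<forall>a\<in>?A. \<Psi> (\<Phi> a) = a"
    proof
      fix f assume "f \<in> ?A"
      hence "f \<in> (V1 \<union> V2) \<rightarrow>\<^sub>E {1..}" unfolding Sset_def by auto
      thus "\<Psi> (\<Phi> f) = f" unfolding \<Phi>_def \<Psi>_def by (auto simp: fun_eq_iff PiE_iff extensional_def)
    qed
    show "\<forall>a'\<in>Sset V1 B1 m1 \<times> Sset V2 B2 ?m2. \<Phi> (\<Psi> a') = a'"
    proof
      fix p assume "p \<in> Sset V1 B1 m1 \<times> Sset V2 B2 ?m2"
      then obtain f1 f2 where p: "p = (f1, f2)" "f1 \<in> V1 \<rightarrow>\<^sub>E {1..}" "f2 \<in> V2 \<rightarrow>\<^sub>E {1..}"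
        unfolding Sset_def by auto
      show "\<Phi> (\<Psi> p) = p" unfolding p \<Phi>_def \<Psi>_def using p D
        by (auto simp: fun_eq_iff PiE_iff extensional_def)
    qed
    show "\<Phi> ` ?A \<subseteq> Sset V1 B1 m1 \<times> Sset V2 B2 ?m2"
    proof
      fix q assume "q \<in> \<Phi> ` ?A"
      then obtain f where f: "f \<in> ?A" and q: "q = \<Phi> f" by auto
      have fP: "f \<in> (V1 \<union> V2) \<rightarrow>\<^sub>E {1..}" and g: "gen (B1 \<union> B2) f"
        and c: "\<And>i. card {v\<in>V1 \<union> V2. f v = i} = m i" and c1: "\<And>i. card {v\<in>V1. f v = i} = m1 i"
        using f unfolding Sset_def by (auto simp: fun_eq_iff)
      have c2: "card {v\<in>V2. f v = i} = ?m2 i" for i using c[of i] c1[of i] card_split[OF V1 V2 D, of f i] by simp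
      have "restrict f V1 \<in> Sset V1 B1 m1"
      proof -
        have "\<forall>J\<in>B1. \<forall>v\<in>J. restrict f V1 v = f v" using BP1 by auto
        hence "gen B1 (restrict f V1) = gen B1 f" by (rule gen_cong)
        hence "gen B1 (restrict f V1)" using g unfolding gen_Un by simp
        moreover have "{v\<in>V1. restrict f V1 v = i} = {v\<in>V1. f v = i}" for i by auto
        ultimately show ?thesis unfolding Sset_def using fP c1 by (auto simp: PiE_iff)
      qed
      moreover have "restrict f V2 \<in> Sset V2 B2 ?m2"
      proof -
        have "\<forall>J\<in>B2. \<forall>v\<in>J. restrict f V2 v = f v" using BP2 by auto
        hence "gen B2 (restrict f V2) = gen B2 f" by (rule gen_cong)
        hence "gen B2 (restrict f V2)" using g unfolding gen_Un by simp
        moreover have "{v\<in>V2. restrict f V2 v = i} = {v\<in>V2. f v = i}" for i by auto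
        ultimately show ?thesis unfolding Sset_def using fP c2 by (auto simp: PiE_iff)
      qed
      ultimately show "q \<in> Sset V1 B1 m1 \<times> Sset V2 B2 ?m2" unfolding q \<Phi>_def by simp
    qed
    show "\<Psi> ` (Sset V1 B1 m1 \<times> Sset V2 B2 ?m2) \<subseteq> ?A"
    proof
      fix q assume "q \<in> \<Psi> ` (Sset V1 B1 m1 \<times> Sset V2 B2 ?m2)"
      then obtain f1 f2 where f1: "f1 \<in> Sset V1 B1 m1" and f2: "f2 \<in> Sset V2 B2 ?m2" and q: "q = \<Psi> (f1, f2)" by auto
      define f where "f = \<Psi> (f1, f2)"
      have f1P: "f1 \<in> V1 \<rightarrow>\<^sub>E {1..}" and g1: "gen B1 f1" and c1: "\<And>i. card {v\<in>V1. f1 v = i} = m1 i"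
        using f1 unfolding Sset_def by auto
      have f2P: "f2 \<in> V2 \<rightarrow>\<^sub>E {1..}" and g2: "gen B2 f2" and c2: "\<And>i. card {v\<in>V2. f2 v = i} = ?m2 i"
        using f2 unfolding Sset_def by auto
      have e1: "\<And>v. v \<in> V1 \<Longrightarrow> f v = f1 v" and e2: "\<And>v. v \<in> V2 \<Longrightarrow> f v = f2 v"
        unfolding f_def \<Psi>_def using D by auto
      have fP: "f \<in> (V1 \<union> V2) \<rightarrow>\<^sub>E {1..}" using f1P f2P e1 e2 unfolding f_def \<Psi>_def by (auto simp: PiE_iff extensional_def)
      have "gen B1 f" using g1 gen_cong[of B1 f f1] BP1 e1 by (metis subsetD)
      moreover have "gen B2 f" using g2 gen_cong[of B2 f f2] BP2 e2 by (metis subsetD)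
      ultimately have g: "gen (B1 \<union> B2) f" using gen_Un by blast
      have s1: "{v\<in>V1. f v = i} = {v\<in>V1. f1 v = i}" for i using e1 by auto
      have s2: "{v\<in>V2. f v = i} = {v\<in>V2. f2 v = i}" for i using e2 by auto
      have c: "card {v\<in>V1 \<union> V2. f v = i} = m i" for i
        using card_split[OF V1 V2 D, of f i] s1 s2 c1 c2 m1[rule_format, of i] by simp
      have "(\<lambda>i. card {v\<in>V1. f v = i}) = m1" using s1 c1 by simp
      thus "q \<in> ?A" unfolding q f_def[symmetric] Sset_def using fP g c by simp
    qed
  qed
  hence "card ?A = card (Sset V1 B1 m1 \<times> Sset V2 B2 ?m2)" by (rule bij_betw_same_card)
  thus ?thesis by (simp add: card_cartesian_product)
qed

lemma part_prod:
  assumes V1: "finite V1" and V2: "finite V2" and D: "V1 \<inter> V2 = {}"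
    and B1: "building_set V1 B1" and B2: "building_set V2 B2" and fm: "fin_supp m"
  shows "FB (V1 \<union> V2) (B1 \<union> B2) m = ps_mult (FB V1 B1) (FB V2 B2) m"
proof -
  note BP1 = bs_props[OF B1] and BP2 = bs_props[OF B2]
  have BP: "\<forall>J\<in>B1 \<union> B2. J \<noteq> {} \<and> J \<subseteq> V1 \<union> V2" using BP1 BP2 by blast
  have V: "finite (V1 \<union> V2)" using V1 V2 by simp
  let ?SS = "Sset (V1 \<union> V2) (B1 \<union> B2) m"
  let ?C = "{m1. \<forall>i. m1 i \<le> m i}"
  let ?g = "\<lambda>f i. card {v\<in>V1. f v = i}"
  have gC: "?g ` ?SS \<subseteq> ?C"
  proof
    fix x assume "x \<in> ?g ` ?SS"
    then obtain f where f: "f \<in> ?SS" and x: "x = ?g f" by auto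
    have "card {v\<in>V1. f v = i} \<le> m i" for i
    proof -
      have "card {v\<in>V1. f v = i} \<le> card {v\<in>V1 \<union> V2. f v = i}" using V by (intro card_mono) auto
      thus ?thesis using f unfolding Sset_def by auto
    qed
    thus "x \<in> ?C" unfolding x by simp
  qed
  have "FB (V1 \<union> V2) (B1 \<union> B2) m = card ?SS" using FB_eq[OF V BP] .
  also have "\<dots> = (\<Sum>m1\<in>?C. card {f\<in>?SS. ?g f = m1})"
    by (rule card_fibers[OF finite_Sset[OF V] finite_below[OF fm] gC])
  also have "\<dots> = (\<Sum>m1\<in>?C. card (Sset V1 B1 m1) * card (Sset V2 B2 (\<lambda>i. m i - m1 i)))"
    by (intro sum.cong refl fiber_prod[OF V1 V2 D BP1 BP2]) simp
  also have "\<dots> = ps_mult (FB V1 B1) (FB V2 B2) m"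
    unfolding ps_mult_def FB_eq[OF V1 BP1] FB_eq[OF V2 BP2] ..
  finally show ?thesis .
qed

definition mc :: "nat list \<Rightarrow> nat \<Rightarrow> nat" where
  "mc \<alpha> = (\<lambda>i. if 1 \<le> i \<and> i \<le> length \<alpha> then \<alpha> ! (i - 1) else 0)"

lemma Mcoef_mc: "Mcoef F \<alpha> = F (mc \<alpha>)" unfolding Mcoef_def mc_def ..

lemma mc_lo: "i \<le> length \<beta> \<Longrightarrow> mc (\<beta> @ \<gamma>) i = mc \<beta> i"
  unfolding mc_def by (auto simp: nth_append)

lemma mc_hi: "1 \<le> j \<Longrightarrow> mc (\<beta> @ \<gamma>) (j + length \<beta>) = mc \<gamma> j"
  unfolding mc_def by (auto simp: nth_append)

lemma mc_big: "length \<beta> < i \<Longrightarrow> mc \<beta> i = 0"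
  unfolding mc_def by auto

lemma mc_0: "mc \<alpha> 0 = 0"
  unfolding mc_def by auto

lemma gen_contr:
  assumes g: "gen B f" and I: "I = {v\<in>V. f v \<le> k}" and fV: "\<forall>J\<in>B. J \<subseteq> V"
  shows "gen (contr V B I) (\<lambda>v. f v - k)"
  unfolding gen_def
proof
  fix J' assume J': "J' \<in> contr V B I"
  hence J'1: "J' \<subseteq> V - I" "J' \<noteq> {}" and "J' \<in> B \<or> (\<exists>I'\<subseteq>I. J' \<union> I' \<in> B)" unfolding contr_def by auto
  then obtain J where J: "J \<in> B" "J' \<subseteq> J" "J - J' \<subseteq> I" by blast
  obtain a where a: "a \<in> J" "\<forall>b\<in>J. b \<noteq> a \<longrightarrow> f b < f a" using g J(1) unfolding gen_def by blast
  obtain w where w: "w \<in> J'" using J'1 by blast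
  have gt: "\<And>b. b \<in> J' \<Longrightarrow> k < f b" using J'1 I by auto
  have aJ': "a \<in> J'"
  proof (rule ccontr)
    assume "a \<notin> J'"
    hence "a \<in> I" using a J by blast
    hence "f a \<le> k" using I by simp
    moreover have "w \<noteq> a" using w \<open>a \<notin> J'\<close> by blast
    hence "f w < f a" using a J w by blast
    ultimately show False using gt[OF w] by simp
  qed
  have "\<forall>b\<in>J'. b \<noteq> a \<longrightarrow> f b - k < f a - k"
    using a J gt aJ' by (metis diff_less_mono less_imp_le subsetD)
  thus "\<exists>a\<in>J'. \<forall>b\<in>J'. b \<noteq> a \<longrightarrow> f b - k < f a - k" using aJ' by blast
qed

lemma gen_glue:
  assumes BV: "\<forall>J\<in>B. J \<subseteq> V" and IV: "I \<subseteq> V"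
    and g1: "gen (restr B I) f" and g2: "gen (contr V B I) h"
    and fh: "\<forall>v\<in>V - I. f v = h v + k" and lo: "\<forall>v\<in>I. f v \<le> k" and hpos: "\<forall>v\<in>V - I. 1 \<le> h v"
  shows "gen B f"
  unfolding gen_def
proof
  fix J assume J: "J \<in> B"
  show "\<exists>a\<in>J. \<forall>b\<in>J. b \<noteq> a \<longrightarrow> f b < f a"
  proof (cases "J \<subseteq> I")
    case True
    hence "J \<in> restr B I" using J unfolding restr_def by simp
    thus ?thesis using g1 unfolding gen_def by blast
  next
    case False
    let ?J' = "J - I"
    have "?J' \<in> contr V B I"
    proof -
      have "?J' \<union> (J \<inter> I) \<in> B" using J by (metis Diff_partition Int_lower2 Un_Diff_Int Un_commute)
      moreover have "J \<inter> I \<subseteq> I" by simp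
      ultimately show ?thesis using False BV J unfolding contr_def by blast
    qed
    then obtain a where a: "a \<in> ?J'" "\<forall>b\<in>?J'. b \<noteq> a \<longrightarrow> h b < h a" using g2 unfolding gen_def by blast
    have aV: "a \<in> V - I" using a BV J by blast
    have "\<forall>b\<in>J. b \<noteq> a \<longrightarrow> f b < f a"
    proof (intro ballI impI)
      fix b assume b: "b \<in> J" "b \<noteq> a"
      show "f b < f a"
      proof (cases "b \<in> I")
        case True
        have "f b \<le> k" using lo True by blast
        moreover have "f a = h a + k" "1 \<le> h a" using fh hpos aV by auto
        ultimately show ?thesis by simp
      next
        case False
        hence "b \<in> ?J'" "b \<in> V - I" using b BV J by auto
        thus ?thesis using a b fh aV by auto
      qed
    qed
    thus ?thesis using a by blast
  qed
qed

lemma fiber_coprod: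
  assumes V: "finite V" and BP: "\<forall>J\<in>B. J \<noteq> {} \<and> J \<subseteq> V" and IV: "I \<subseteq> V"
  shows "card {f \<in> Sset V B (mc (\<beta> @ \<gamma>)). {v\<in>V. f v \<le> length \<beta>} = I}
         = card (Sset I (restr B I) (mc \<beta>)) * card (Sset (V - I) (contr V B I) (mc \<gamma>))"
proof -
  define k where "k = length \<beta>"
  let ?A = "{f \<in> Sset V B (mc (\<beta> @ \<gamma>)). {v\<in>V. f v \<le> length \<beta>} = I}"
  let ?P = "Sset I (restr B I) (mc \<beta>) \<times> Sset (V - I) (contr V B I) (mc \<gamma>)"
  have BV: "\<forall>J\<in>B. J \<subseteq> V" using BP by blast
  have fI: "finite I" using V IV finite_subset by blast
  have fVI: "finite (V - I)" using V by simp
  have VI: "I \<union> (V - I) = V" "I \<inter> (V - I) = {}" using IV by auto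
  define \<Phi> where "\<Phi> = (\<lambda>f::'a \<Rightarrow> nat. (restrict f I, restrict (\<lambda>v. f v - k) (V - I)))"
  define \<Psi> where "\<Psi> = (\<lambda>(g::'a\<Rightarrow>nat, h::'a\<Rightarrow>nat). (\<lambda>v. if v \<in> I then g v else if v \<in> V - I then h v + k else undefined))"
  have Aprops: "f \<in> V \<rightarrow>\<^sub>E {1..} \<and> gen B f \<and> (\<forall>i. card {v\<in>V. f v = i} = mc (\<beta> @ \<gamma>) i) \<and>
      (\<forall>v\<in>I. f v \<le> k) \<and> (\<forall>v\<in>V - I. k < f v)" if "f \<in> ?A" for f
    using that unfolding Sset_def k_def by auto
  have "bij_betw \<Phi> ?A ?P"
  proof (rule bij_betw_byWitness[where f'=\<Psi>])
    show "\<forall>a\<in>?A. \<Psi> (\<Phi> a) = a"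
    proof
      fix f assume f: "f \<in> ?A"
      note fp = Aprops[OF f]
      show "\<Psi> (\<Phi> f) = f"
      proof
        fix v
        consider "v \<in> I" | "v \<in> V - I" | "v \<notin> V" using IV by blast
        then show "\<Psi> (\<Phi> f) v = f v"
        proof cases
          case 1 thus ?thesis unfolding \<Phi>_def \<Psi>_def by simp
        next
          case 2
          hence "k < f v" using fp by blast
          thus ?thesis using 2 unfolding \<Phi>_def \<Psi>_def by simp
        next
          case 3
          hence "f v = undefined" using fp by (meson PiE_arb)
          thus ?thesis using 3 IV unfolding \<Phi>_def \<Psi>_def by auto
        qed
      qed
    qed
    show "\<forall>a'\<in>?P. \<Phi> (\<Psi> a') = a'"
    proof
      fix p assume "p \<in> ?P"
      then obtain g h where p: "p = (g, h)" "g \<in> I \<rightarrow>\<^sub>E {1..}" "h \<in> (V - I) \<rightarrow>\<^sub>E {1..}"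
        unfolding Sset_def by auto
      show "\<Phi> (\<Psi> p) = p" unfolding p \<Phi>_def \<Psi>_def using p
        by (auto simp: fun_eq_iff PiE_iff extensional_def)
    qed
    show "\<Phi> ` ?A \<subseteq> ?P"
    proof
      fix q assume "q \<in> \<Phi> ` ?A"
      then obtain f where f: "f \<in> ?A" and q: "q = \<Phi> f" by auto
      note fp = Aprops[OF f]
      have fP: "f \<in> V \<rightarrow>\<^sub>E {1..}" and g: "gen B f" and c: "\<And>i. card {v\<in>V. f v = i} = mc (\<beta> @ \<gamma>) i"
        and lo: "\<forall>v\<in>I. f v \<le> k" and hi: "\<forall>v\<in>V - I. k < f v" using fp by auto
      have Ieq: "I = {v\<in>V. f v \<le> k}" using f unfolding k_def by auto
      have "restrict f I \<in> Sset I (restr B I) (mc \<beta>)"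
      proof -
        have "\<forall>J\<in>restr B I. \<forall>v\<in>J. restrict f I v = f v" unfolding restr_def by auto
        hence "gen (restr B I) (restrict f I) = gen (restr B I) f" by (rule gen_cong)
        moreover have "gen (restr B I) f" by (rule gen_mono[OF g]) (auto simp: restr_def)
        ultimately have g1: "gen (restr B I) (restrict f I)" by simp
        have "card {v\<in>I. restrict f I v = i} = mc \<beta> i" for i
        proof (cases "i \<le> k")
          case True
          hence "{v\<in>I. restrict f I v = i} = {v\<in>V. f v = i}" using Ieq by auto
          thus ?thesis using c[of i] mc_lo[of i \<beta> \<gamma>] True unfolding k_def by simp
        next
          case False
          hence e: "{v\<in>I. restrict f I v = i} = {}" using lo by fastforce
          show ?thesis using False mc_big[of \<beta> i] unfolding k_def by (subst e) simp
        qed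
        thus ?thesis unfolding Sset_def using g1 fP IV by (auto simp: PiE_iff)
      qed
      moreover have "restrict (\<lambda>v. f v - k) (V - I) \<in> Sset (V - I) (contr V B I) (mc \<gamma>)"
      proof -
        have "\<forall>J\<in>contr V B I. \<forall>v\<in>J. restrict (\<lambda>v. f v - k) (V - I) v = f v - k" unfolding contr_def by auto
        hence "gen (contr V B I) (restrict (\<lambda>v. f v - k) (V - I)) = gen (contr V B I) (\<lambda>v. f v - k)" by (rule gen_cong)
        moreover have "gen (contr V B I) (\<lambda>v. f v - k)" by (rule gen_contr[OF g Ieq BV])
        ultimately have g2: "gen (contr V B I) (restrict (\<lambda>v. f v - k) (V - I))" by simp
        have "card {v\<in>V - I. restrict (\<lambda>v. f v - k) (V - I) v = j} = mc \<gamma> j" for j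
        proof (cases "j = 0")
          case True
          have e: "{v\<in>V - I. restrict (\<lambda>v. f v - k) (V - I) v = j} = {}"
          proof (rule equals0I)
            fix v assume "v \<in> {v\<in>V - I. restrict (\<lambda>v. f v - k) (V - I) v = j}"
            hence v: "v \<in> V - I" "f v - k = 0" using True by auto
            have "k < f v" using hi v(1) by blast
            thus False using v(2) by simp
          qed
          show ?thesis using True mc_0 by (subst e) simp
        next
          case False
          hence "{v\<in>V - I. restrict (\<lambda>v. f v - k) (V - I) v = j} = {v\<in>V. f v = j + k}" using hi Ieq by auto
          thus ?thesis using c[of "j + k"] mc_hi[of j \<beta> \<gamma>] False unfolding k_def by simp
        qed
        moreover have "\<forall>v\<in>V - I. 1 \<le> f v - k" using hi by (metis Suc_leI zero_less_diff One_nat_def)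
        hence "restrict (\<lambda>v. f v - k) (V - I) \<in> (V - I) \<rightarrow>\<^sub>E {1..}" by auto
        ultimately show ?thesis unfolding Sset_def using g2 by auto
      qed
      ultimately show "q \<in> ?P" unfolding q \<Phi>_def by simp
    qed
    show "\<Psi> ` ?P \<subseteq> ?A"
    proof
      fix q assume "q \<in> \<Psi> ` ?P"
      then obtain g h where gS: "g \<in> Sset I (restr B I) (mc \<beta>)" and hS: "h \<in> Sset (V - I) (contr V B I) (mc \<gamma>)"
        and q: "q = \<Psi> (g, h)" by auto
      define f where "f = \<Psi> (g, h)"
      have gP: "g \<in> I \<rightarrow>\<^sub>E {1..}" and g1: "gen (restr B I) g" and cg: "\<And>i. card {v\<in>I. g v = i} = mc \<beta> i"
        using gS unfolding Sset_def by auto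
      have hP: "h \<in> (V - I) \<rightarrow>\<^sub>E {1..}" and g2: "gen (contr V B I) h" and ch: "\<And>i. card {v\<in>V - I. h v = i} = mc \<gamma> i"
        using hS unfolding Sset_def by auto
      have gk: "\<forall>v\<in>I. g v \<le> k"
      proof
        fix v assume v: "v \<in> I"
        have "mc \<beta> (g v) \<noteq> 0" by (rule Sset_val[OF fI gS v])
        thus "g v \<le> k" using mc_big[of \<beta> "g v"] unfolding k_def by fastforce
      qed
      have hpos: "\<forall>v\<in>V - I. 1 \<le> h v" using hP by auto
      have fI': "\<And>v. v \<in> I \<Longrightarrow> f v = g v" and fVI': "\<And>v. v \<in> V - I \<Longrightarrow> f v = h v + k"
        unfolding f_def \<Psi>_def by auto
      have f1: "1 \<le> f v" if v: "v \<in> V" for v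
      proof (cases "v \<in> I")
        case True thus ?thesis using fI' gP by (auto simp: PiE_iff)
      next
        case False
        hence "v \<in> V - I" using v by blast
        hence "1 \<le> h v" "f v = h v + k" using hpos fVI' by auto
        thus ?thesis by simp
      qed
      have "f \<in> extensional V" unfolding f_def \<Psi>_def using IV by (auto simp: extensional_def)
      hence fP: "f \<in> V \<rightarrow>\<^sub>E {1..}" using f1 by (auto simp: PiE_iff)
      have gf: "gen B f"
      proof (rule gen_glue[OF BV IV])
        have "\<forall>J\<in>restr B I. \<forall>v\<in>J. f v = g v" using fI' unfolding restr_def by auto
        thus "gen (restr B I) f" using g1 gen_cong by blast
        show "gen (contr V B I) h" by fact
        show "\<forall>v\<in>V - I. f v = h v + k" using fVI' by blast
        show "\<forall>v\<in>I. f v \<le> k" using fI' gk by simp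
        show "\<forall>v\<in>V - I. 1 \<le> h v" by fact
      qed
      have Ieq: "{v\<in>V. f v \<le> length \<beta>} = I"
      proof (intro set_eqI iffI)
        fix v assume "v \<in> {v\<in>V. f v \<le> length \<beta>}"
        hence v: "v \<in> V" "f v \<le> k" unfolding k_def by auto
        show "v \<in> I"
        proof (rule ccontr)
          assume "v \<notin> I"
          hence "v \<in> V - I" using v by blast
          hence "1 \<le> h v" "f v = h v + k" using hpos fVI' by auto
          thus False using v by simp
        qed
      next
        fix v assume v: "v \<in> I"
        hence "f v \<le> k" using fI' gk by simp
        thus "v \<in> {v\<in>V. f v \<le> length \<beta>}" using v IV unfolding k_def by auto
      qed
      have cf: "card {v\<in>V. f v = i} = mc (\<beta> @ \<gamma>) i" for i
      proof -
        have "card {v\<in>V. f v = i} = card {v\<in>I. f v = i} + card {v\<in>V - I. f v = i}"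
          using card_split[OF fI fVI VI(2), of f i] unfolding VI(1) .
        also have "\<dots> = mc (\<beta> @ \<gamma>) i"
        proof (cases "i \<le> k")
          case True
          have e: "{v\<in>V - I. f v = i} = {}"
          proof (rule equals0I)
            fix v assume "v \<in> {v\<in>V - I. f v = i}"
            hence v: "v \<in> V - I" "f v = i" by auto
            hence "1 \<le> h v" "f v = h v + k" using hpos fVI' by auto
            thus False using v True by simp
          qed
          have "{v\<in>I. f v = i} = {v\<in>I. g v = i}" using fI' by auto
          thus ?thesis using cg[of i] mc_lo[of i \<beta> \<gamma>] True unfolding k_def by (subst e) simp
        next
          case False
          have e: "{v\<in>I. f v = i} = {}"
          proof (rule equals0I)
            fix v assume "v \<in> {v\<in>I. f v = i}"
            hence v: "v \<in> I" "f v = i" by auto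
            hence "g v \<le> k" "f v = g v" using gk fI' by auto
            thus False using v False by simp
          qed
          have "{v\<in>V - I. f v = i} = {v\<in>V - I. h v = i - k}" using fVI' False by auto
          moreover have "mc (\<beta> @ \<gamma>) i = mc \<gamma> (i - k)"
            using mc_hi[of "i - k" \<beta> \<gamma>] False unfolding k_def by simp
          ultimately show ?thesis using ch[of "i - k"] by (subst e) simp
        qed
        finally show ?thesis .
      qed
      show "q \<in> ?A" unfolding q f_def[symmetric] Sset_def using fP gf cf Ieq by simp
    qed
  qed
  hence "card ?A = card ?P" by (rule bij_betw_same_card)
  thus ?thesis by (simp add: card_cartesian_product)
qed

lemma part_coprod:
  assumes V: "finite V" and B: "building_set V B"
  shows "Mcoef (FB V B) (\<beta> @ \<gamma>) =
    (\<Sum>I\<in>Pow V. Mcoef (FB I (restr B I)) \<beta> * Mcoef (FB (V - I) (contr V B I)) \<gamma>)"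
proof -
  note BP = bs_props[OF B]
  let ?SS = "Sset V B (mc (\<beta> @ \<gamma>))"
  let ?g = "\<lambda>f. {v\<in>V. f v \<le> length \<beta>}"
  have gC: "?g ` ?SS \<subseteq> Pow V" by auto
  have "Mcoef (FB V B) (\<beta> @ \<gamma>) = card ?SS" unfolding Mcoef_mc FB_eq[OF V BP] ..
  also have "\<dots> = (\<Sum>I\<in>Pow V. card {f\<in>?SS. ?g f = I})"
    by (rule card_fibers[OF finite_Sset[OF V] _ gC]) (simp add: V)
  also have "\<dots> = (\<Sum>I\<in>Pow V. card (Sset I (restr B I) (mc \<beta>)) * card (Sset (V - I) (contr V B I) (mc \<gamma>)))"
    by (intro sum.cong refl fiber_coprod[OF V BP]) simp
  also have "\<dots> = (\<Sum>I\<in>Pow V. Mcoef (FB I (restr B I)) \<beta> * Mcoef (FB (V - I) (contr V B I)) \<gamma>)"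
  proof (intro sum.cong refl)
    fix I assume I: "I \<in> Pow V"
    have fI: "finite I" using I V finite_subset by blast
    have r: "\<forall>J\<in>restr B I. J \<noteq> {} \<and> J \<subseteq> I" using BP unfolding restr_def by auto
    have c: "\<forall>J\<in>contr V B I. J \<noteq> {} \<and> J \<subseteq> V - I" unfolding contr_def by auto
    show "card (Sset I (restr B I) (mc \<beta>)) * card (Sset (V - I) (contr V B I) (mc \<gamma>)) =
      Mcoef (FB I (restr B I)) \<beta> * Mcoef (FB (V - I) (contr V B I)) \<gamma>"
      using V unfolding Mcoef_mc FB_eq[OF fI r] FB_eq[OF finite_Diff[OF V] c] by simp
  qed
  finally show ?thesis .
qed

theorem mainTheorem4:
  shows "(\<forall>m. FB ({}::'a set) {} m = (if (\<forall>i. m i = 0) then 1 else 0)) \<and>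
    (\<forall>(V::'a set) B. finite V \<and> building_set V B \<longrightarrow>
        quasisymmetric (FB V B) \<and>
        homogeneous (card V) (FB V B) \<and>
        zetaQ (card V) (FB V B) = (if discrete_bs V B then 1 else 0) \<and>
        (\<forall>\<beta> \<gamma>. composition \<beta> \<and> composition \<gamma> \<longrightarrow>
            Mcoef (FB V B) (\<beta> @ \<gamma>) =
              (\<Sum>I\<in>Pow V. Mcoef (FB I (restr B I)) \<beta> * Mcoef (FB (V - I) (contr V B I)) \<gamma>))) \<and>
    (\<forall>(V1::'a set) V2 B1 B2. finite V1 \<and> finite V2 \<and> V1 \<inter> V2 = {} \<and>
        building_set V1 B1 \<and> building_set V2 B2 \<longrightarrow>
        (\<forall>m. fin_supp m \<longrightarrow>
           FB (V1 \<union> V2) (B1 \<union> B2) m = ps_mult (FB V1 B1) (FB V2 B2) m))"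
proof (intro conjI)
  show "\<forall>m. FB ({}::'a set) {} m = (if (\<forall>i. m i = 0) then 1 else 0)" using part_empty by blast
  show "\<forall>(V::'a set) B. finite V \<and> building_set V B \<longrightarrow>
        quasisymmetric (FB V B) \<and>
        homogeneous (card V) (FB V B) \<and>
        zetaQ (card V) (FB V B) = (if discrete_bs V B then 1 else 0) \<and>
        (\<forall>\<beta> \<gamma>. composition \<beta> \<and> composition \<gamma> \<longrightarrow>
            Mcoef (FB V B) (\<beta> @ \<gamma>) =
              (\<Sum>I\<in>Pow V. Mcoef (FB I (restr B I)) \<beta> * Mcoef (FB (V - I) (contr V B I)) \<gamma>))"
  proof (intro allI impI conjI)
    fix V :: "'a set" and B assume h: "finite V \<and> building_set V B"
    show "quasisymmetric (FB V B)" using part_qs h by blast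
    show "homogeneous (card V) (FB V B)" using part_homog h by blast
    show "zetaQ (card V) (FB V B) = (if discrete_bs V B then 1 else 0)" using part_zeta h by blast
    fix \<beta> \<gamma> :: "nat list"
    show "Mcoef (FB V B) (\<beta> @ \<gamma>) =
              (\<Sum>I\<in>Pow V. Mcoef (FB I (restr B I)) \<beta> * Mcoef (FB (V - I) (contr V B I)) \<gamma>)"
      using part_coprod h by blast
  qed
  show "\<forall>(V1::'a set) V2 B1 B2. finite V1 \<and> finite V2 \<and> V1 \<inter> V2 = {} \<and>
        building_set V1 B1 \<and> building_set V2 B2 \<longrightarrow>
        (\<forall>m. fin_supp m \<longrightarrow>
           FB (V1 \<union> V2) (B1 \<union> B2) m = ps_mult (FB V1 B1) (FB V2 B2) m)"
    using part_prod by blast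
qed


end
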